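(* Let $(\Omega,\Sigma,\mathbb{P})$ be a probability space and let $X$ be an ideal of $L_0(\Sigma)$ which contains the constant functions and admits a strictly positive order continuous linear functional. Let $f\in X$ with $f\ge0$ and $\sigma(f)=\Sigma$, and let $O_f=\operatorname{span}\{\mathbb 1,(f-k)^+:k\in\mathbb{R}\}$. Then: (a) the closure of $O_f$ in the $\sigma(X,X_n^\sim)$-topology equals $X$; (b) for every $g\in X$ there exists a sequence $(g_n)$ in $O_f$ such that $g_n\to g$ almost everywhere.
   Context: $L_0(\Sigma)$ is the vector lattice of real-valued measurable functions modulo a.e. equality with the a.e. order; an ideal is a subspace $X$ with $|x|\le|y|$, $y\in X$ implying $x\in X$. $\mathbb 1$ is the constant one function. A net $x_\alpha$ converges in order to $x$ in $X$ if there is a net $z_\beta\downarrow 0$ in $X$ such that for every $\beta$ there is $\alpha_0$ with $|x_\alpha-x|\le z_\beta$ for $\alpha\ge\alpha_0$. A linear functional $\phi$ on $X$ is order continuous if $\phi(x_\alpha)\to 0$ whenever $x_\alpha\to 0$ in order in $X$; it is strictly positive if $\phi(x)>0$ whenever $x\ge0$, $x\ne0$. $X_n^\sim$ is the space of order continuous linear functionals on $X$, and $\sigma(X,X_n^\sim)$ is the weak topology on $X$ induced by $X_n^\sim$. $\sigma(f)$ is the smallest sub-$\sigma$-algebra of $\Sigma$ making $f$ measurable and containing all $\mathbb{P}$-null sets (so the hypothesis $\sigma(f)=\Sigma$ is meant in this sense). *)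

theory Defs
  imports "HOL-Probability.Probability"
begin

text \<open>Elements of L_0 are represented by real-valued Borel measurable functions on the
  sample space; all order relations and equalities are taken almost everywhere.\<close>

definition is_ideal_L0 :: "'a measure \<Rightarrow> ('a \<Rightarrow> real) set \<Rightarrow> bool" where
  "is_ideal_L0 M X \<longleftrightarrow>
     X \<subseteq> borel_measurable M \<and>
     (\<lambda>_. 0) \<in> X \<and>
     (\<forall>x\<in>X. \<forall>y\<in>X. (\<lambda>\<omega>. x \<omega> + y \<omega>) \<in> X) \<and>
     (\<forall>c::real. \<forall>x\<in>X. (\<lambda>\<omega>. c * x \<omega>) \<in> X) \<and>
     (\<forall>x y. y \<in> X \<longrightarrow> x \<in> borel_measurable M \<longrightarrow>
        (AE \<omega> in M. \<bar>x \<omega>\<bar> \<le> \<bar>y \<omega>\<bar>) \<longrightarrow> x \<in> X)"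

text \<open>A net is represented by its (eventuality) filter F on X;
  the dominating net z_beta decreasing to 0 is represented by its range D, a nonempty
  downward directed subset of X with infimum 0 in X.\<close>

definition order_conv :: "'a measure \<Rightarrow> ('a \<Rightarrow> real) set \<Rightarrow> ('a \<Rightarrow> real) filter \<Rightarrow> ('a \<Rightarrow> real) \<Rightarrow> bool" where
  "order_conv M X F x \<longleftrightarrow>
     (\<exists>D. D \<subseteq> X \<and> D \<noteq> {} \<and>
        (\<forall>z1\<in>D. \<forall>z2\<in>D. \<exists>z3\<in>D. (AE \<omega> in M. z3 \<omega> \<le> z1 \<omega>) \<and> (AE \<omega> in M. z3 \<omega> \<le> z2 \<omega>)) \<and>
        (\<forall>z\<in>D. AE \<omega> in M. 0 \<le> z \<omega>) \<and>
        (\<forall>w\<in>X. (\<forall>z\<in>D. AE \<omega> in M. w \<omega> \<le> z \<omega>) \<longrightarrow> (AE \<omega> in M. w \<omega> \<le> 0)) \<and>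
        (\<forall>z\<in>D. eventually (\<lambda>y. AE \<omega> in M. \<bar>y \<omega> - x \<omega>\<bar> \<le> z \<omega>) F))"

definition linear_functional_on :: "'a measure \<Rightarrow> ('a \<Rightarrow> real) set \<Rightarrow> (('a \<Rightarrow> real) \<Rightarrow> real) \<Rightarrow> bool" where
  "linear_functional_on M X \<phi> \<longleftrightarrow>
     (\<forall>x\<in>X. \<forall>y\<in>X. (AE \<omega> in M. x \<omega> = y \<omega>) \<longrightarrow> \<phi> x = \<phi> y) \<and>
     (\<forall>x\<in>X. \<forall>y\<in>X. \<phi> (\<lambda>\<omega>. x \<omega> + y \<omega>) = \<phi> x + \<phi> y) \<and>
     (\<forall>c::real. \<forall>x\<in>X. \<phi> (\<lambda>\<omega>. c * x \<omega>) = c * \<phi> x)"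

definition order_continuous_functional :: "'a measure \<Rightarrow> ('a \<Rightarrow> real) set \<Rightarrow> (('a \<Rightarrow> real) \<Rightarrow> real) \<Rightarrow> bool" where
  "order_continuous_functional M X \<phi> \<longleftrightarrow>
     linear_functional_on M X \<phi> \<and>
     (\<forall>F. eventually (\<lambda>y. y \<in> X) F \<longrightarrow> order_conv M X F (\<lambda>_. 0) \<longrightarrow> (\<phi> \<longlongrightarrow> 0) F)"

definition strictly_positive_functional :: "'a measure \<Rightarrow> ('a \<Rightarrow> real) set \<Rightarrow> (('a \<Rightarrow> real) \<Rightarrow> real) \<Rightarrow> bool" where
  "strictly_positive_functional M X \<phi> \<longleftrightarrow>
     (\<forall>x\<in>X. (AE \<omega> in M. 0 \<le> x \<omega>) \<longrightarrow> \<not> (AE \<omega> in M. x \<omega> = 0) \<longrightarrow> \<phi> x > 0)"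

definition order_dual_n :: "'a measure \<Rightarrow> ('a \<Rightarrow> real) set \<Rightarrow> (('a \<Rightarrow> real) \<Rightarrow> real) set" where
  "order_dual_n M X = {\<phi>. order_continuous_functional M X \<phi>}"

definition weak_topology_n :: "'a measure \<Rightarrow> ('a \<Rightarrow> real) set \<Rightarrow> ('a \<Rightarrow> real) topology" where
  "weak_topology_n M X = topology_generated_by
     (insert X {{x \<in> X. \<phi> x \<in> U} | \<phi> U. \<phi> \<in> order_dual_n M X \<and> open U})"

definition sigma_gen_completed :: "'a measure \<Rightarrow> ('a \<Rightarrow> real) \<Rightarrow> 'a set set" where
  "sigma_gen_completed M f = sigma_sets (space M)
     ({f -` B \<inter> space M | B. B \<in> sets borel} \<union> null_sets M)"

definition O_gen :: "('a \<Rightarrow> real) \<Rightarrow> ('a \<Rightarrow> real) set" where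
  "O_gen f = insert (\<lambda>_. 1) {(\<lambda>\<omega>. max (f \<omega> - k) 0) | k. True}"

definition O_span :: "('a \<Rightarrow> real) \<Rightarrow> ('a \<Rightarrow> real) set" where
  "O_span f = {(\<lambda>\<omega>. \<Sum>g\<in>S. c g * g \<omega>) | S c. finite S \<and> S \<subseteq> O_gen f}"

end

theory Submission imports Defs begin


lemma O_span_const1: "(\<lambda>_. 1) \<in> O_span f"
  unfolding O_span_def O_gen_def
  by (rule CollectI, rule exI[of _ "{\<lambda>_. 1}"], rule exI[of _ "\<lambda>_. 1"]) auto

lemma O_span_gen: "(\<lambda>\<omega>. max (f \<omega> - k) 0) \<in> O_span f"
  unfolding O_span_def O_gen_def
  by (rule CollectI, rule exI[of _ "{\<lambda>\<omega>. max (f \<omega> - k) 0}"], rule exI[of _ "\<lambda>_. 1"]) auto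

lemma O_span_zero: "(\<lambda>_. 0) \<in> O_span f"
  unfolding O_span_def
  by (rule CollectI, rule exI[of _ "{}"], rule exI[of _ "\<lambda>_. 1"]) auto

lemma O_span_scale: assumes "u \<in> O_span f" shows "(\<lambda>\<omega>. a * u \<omega>) \<in> O_span f"
proof -
  from assms obtain S c where u: "u = (\<lambda>\<omega>. \<Sum>g\<in>S. c g * g \<omega>)" "finite S" "S \<subseteq> O_gen f"
    unfolding O_span_def by blast
  have "(\<lambda>\<omega>. a * u \<omega>) = (\<lambda>\<omega>. \<Sum>g\<in>S. (a * c g) * g \<omega>)"
    by (simp add: u sum_distrib_left mult.assoc)
  then show ?thesis unfolding O_span_def using u(2,3)
    by (intro CollectI exI[of _ S] exI[of _ "\<lambda>g. a * c g"]) simp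
qed

lemma O_span_add: assumes "u \<in> O_span f" "v \<in> O_span f" shows "(\<lambda>\<omega>. u \<omega> + v \<omega>) \<in> O_span f"
proof -
  from assms(1) obtain S1 c1 where u: "u = (\<lambda>\<omega>. \<Sum>g\<in>S1. c1 g * g \<omega>)" "finite S1" "S1 \<subseteq> O_gen f"
    unfolding O_span_def by blast
  from assms(2) obtain S2 c2 where v: "v = (\<lambda>\<omega>. \<Sum>g\<in>S2. c2 g * g \<omega>)" "finite S2" "S2 \<subseteq> O_gen f"
    unfolding O_span_def by blast
  define c where "c = (\<lambda>g. (if g \<in> S1 then c1 g else 0) + (if g \<in> S2 then c2 g else 0))"
  have e1: "(\<Sum>g\<in>S1\<union>S2. (if g \<in> S1 then c1 g else 0) * g \<omega>) = (\<Sum>g\<in>S1. c1 g * g \<omega>)" for \<omega>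
    using u(2) v(2) by (intro sum.mono_neutral_cong_right) auto
  have e2: "(\<Sum>g\<in>S1\<union>S2. (if g \<in> S2 then c2 g else 0) * g \<omega>) = (\<Sum>g\<in>S2. c2 g * g \<omega>)" for \<omega>
    using u(2) v(2) by (intro sum.mono_neutral_cong_right) auto
  have "(\<lambda>\<omega>. u \<omega> + v \<omega>) = (\<lambda>\<omega>. \<Sum>g\<in>S1\<union>S2. c g * g \<omega>)"
    unfolding c_def distrib_right sum.distrib e1 e2 u v by simp
  then show ?thesis unfolding O_span_def using u v by blast
qed

context
  fixes M :: "'a measure" and X :: "('a \<Rightarrow> real) set"
  assumes ideal: "is_ideal_L0 M X"
begin

lemma X_meas: "x \<in> X \<Longrightarrow> x \<in> borel_measurable M"
  using ideal unfolding is_ideal_L0_def by blast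
lemma X_zero: "(\<lambda>_. 0) \<in> X"
  using ideal unfolding is_ideal_L0_def by blast
lemma X_add: "x \<in> X \<Longrightarrow> y \<in> X \<Longrightarrow> (\<lambda>\<omega>. x \<omega> + y \<omega>) \<in> X"
  using ideal unfolding is_ideal_L0_def by blast
lemma X_scale: "x \<in> X \<Longrightarrow> (\<lambda>\<omega>. c * x \<omega>) \<in> X"
  using ideal unfolding is_ideal_L0_def by blast
lemma X_dom: "y \<in> X \<Longrightarrow> x \<in> borel_measurable M \<Longrightarrow> (AE \<omega> in M. \<bar>x \<omega>\<bar> \<le> \<bar>y \<omega>\<bar>) \<Longrightarrow> x \<in> X"
  using ideal unfolding is_ideal_L0_def by blast

lemma X_sum: "finite I \<Longrightarrow> (\<And>i. i \<in> I \<Longrightarrow> u i \<in> X) \<Longrightarrow> (\<lambda>\<omega>. \<Sum>i\<in>I. u i \<omega>) \<in> X"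
proof (induction I rule: finite_induct)
  case empty then show ?case using X_zero by simp
next
  case (insert i I) then show ?case using X_add[of "u i" "\<lambda>\<omega>. \<Sum>i\<in>I. u i \<omega>"] by simp
qed

lemma X_diff: "x \<in> X \<Longrightarrow> y \<in> X \<Longrightarrow> (\<lambda>\<omega>. x \<omega> - y \<omega>) \<in> X"
  using X_add[of x "\<lambda>\<omega>. (-1) * y \<omega>"] X_scale[of y "-1"] by simp

lemma X_abs: "x \<in> X \<Longrightarrow> (\<lambda>\<omega>. \<bar>x \<omega>\<bar>) \<in> X"
proof -
  assume x: "x \<in> X"
  have [measurable]: "x \<in> borel_measurable M" by (rule X_meas[OF x])
  show ?thesis by (rule X_dom[OF x]) auto
qed

lemma O_span_X:
  assumes cst: "\<forall>c::real. (\<lambda>_. c) \<in> X" and f: "f \<in> X" and uo: "u \<in> O_span f"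
  shows "u \<in> X"
proof -
  have gen: "g \<in> X" if "g \<in> O_gen f" for g
  proof -
    { fix k :: real
      have "(\<lambda>\<omega>. \<bar>f \<omega>\<bar> + \<bar>k\<bar>) \<in> X" using X_add[OF X_abs[OF f], of "\<lambda>_. \<bar>k\<bar>"] cst by simp
      then have "(\<lambda>\<omega>. max (f \<omega> - k) 0) \<in> X"
        by (rule X_dom) (use X_meas[OF f] in auto)
    } then show ?thesis using that cst unfolding O_gen_def by auto
  qed
  from uo obtain S c where u: "u = (\<lambda>\<omega>. \<Sum>g\<in>S. c g * g \<omega>)" "finite S" "S \<subseteq> O_gen f"
    unfolding O_span_def by blast
  show ?thesis unfolding u(1) using u gen by (intro X_sum X_scale) auto
qed

end



lemma OC:
  assumes ideal: "is_ideal_L0 M X" and phi: "order_continuous_functional M X \<phi>"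
    and gs: "\<And>n. gs n \<in> X" and g: "g \<in> X" and z: "z \<in> X"
    and dom: "\<And>n. AE \<omega> in M. \<bar>gs n \<omega> - g \<omega>\<bar> \<le> z \<omega>"
    and lim: "AE \<omega> in M. (\<lambda>n. gs n \<omega>) \<longlonglongrightarrow> g \<omega>"
  shows "(\<lambda>n. \<phi> (gs n)) \<longlonglongrightarrow> \<phi> g"
proof -
  define ys where "ys n = (\<lambda>\<omega>. gs n \<omega> - g \<omega>)" for n
  have ys: "ys n \<in> X" for n using X_diff[OF ideal gs g] by (simp add: ys_def)
  have [measurable]: "z \<in> borel_measurable M" "\<And>n. ys n \<in> borel_measurable M"
    using X_meas[OF ideal] z ys by auto
  define d where "d k = (\<lambda>\<omega>. SUP n\<in>{k..}. min (z \<omega>) \<bar>ys n \<omega>\<bar>)" for k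
  have bdd: "bdd_above ((\<lambda>n. min (z \<omega>) \<bar>ys n \<omega>\<bar>) ` {k..})" for k \<omega>
    by (auto intro!: bdd_aboveI[of _ "z \<omega>"])
  have dmeas[measurable]: "d k \<in> borel_measurable M" for k
    unfolding d_def by (intro borel_measurable_cSUP bdd) auto
  have all_dom: "AE \<omega> in M. \<forall>n. \<bar>ys n \<omega>\<bar> \<le> z \<omega>"
    using dom unfolding ys_def AE_all_countable by auto
  have zpos: "AE \<omega> in M. 0 \<le> z \<omega>"
    using dom[of 0] by eventually_elim auto
  have dbounds: "AE \<omega> in M. \<forall>k. 0 \<le> d k \<omega> \<and> d k \<omega> \<le> z \<omega>"
    using zpos
  proof eventually_elim
    case (elim \<omega>)
    show ?case
    proof
      fix k
      have "0 \<le> min (z \<omega>) \<bar>ys k \<omega>\<bar>" using elim by simp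
      also have "\<dots> \<le> d k \<omega>" unfolding d_def by (rule cSUP_upper[OF _ bdd]) simp
      finally show "0 \<le> d k \<omega> \<and> d k \<omega> \<le> z \<omega>"
        unfolding d_def by (auto intro!: cSUP_least)
    qed
  qed
  have dX: "d k \<in> X" for k
    by (rule X_dom[OF ideal z]) (use dbounds in \<open>auto elim!: eventually_mono intro: order_trans[OF _ abs_ge_self]\<close>)
  have mono: "d k' \<omega> \<le> d k \<omega>" if "k \<le> k'" for k k' \<omega>
    unfolding d_def using that by (intro cSUP_subset_mono bdd) auto
  have dlim: "AE \<omega> in M. \<forall>e>0. \<exists>k. d k \<omega> \<le> e"
    using lim
  proof eventually_elim
    case (elim \<omega>)
    show ?case
    proof (intro allI impI)
      fix e :: real assume "0 < e"
      with elim obtain N where N: "\<And>n. n \<ge> N \<Longrightarrow> \<bar>gs n \<omega> - g \<omega>\<bar> < e"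
        unfolding LIMSEQ_iff by (auto simp: dist_real_def)
      have "d N \<omega> \<le> e" unfolding d_def
        by (rule cSUP_least) (auto simp: ys_def intro: less_imp_le min.coboundedI2 order_trans[OF _ less_imp_le[OF N]])
      then show "\<exists>k. d k \<omega> \<le> e" by blast
    qed
  qed
  define F where "F = filtermap ys sequentially"
  have oc: "order_conv M X F (\<lambda>_. 0)"
    unfolding order_conv_def
  proof (intro exI[of _ "range d"] conjI ballI impI)
    show "range d \<subseteq> X" using dX by auto
    show "range d \<noteq> {}" by simp
  next
    fix z1 z2 assume "z1 \<in> range d" "z2 \<in> range d"
    then obtain k1 k2 where "z1 = d k1" "z2 = d k2" by auto
    then show "\<exists>z3\<in>range d. (AE \<omega> in M. z3 \<omega> \<le> z1 \<omega>) \<and> (AE \<omega> in M. z3 \<omega> \<le> z2 \<omega>)"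
      by (intro bexI[of _ "d (max k1 k2)"]) (auto intro!: AE_I2 mono)
  next
    fix z assume "z \<in> range d"
    then show "AE \<omega> in M. 0 \<le> z \<omega>" using dbounds by auto
  next
    fix w assume "w \<in> X" and wle: "\<forall>z\<in>range d. AE \<omega> in M. w \<omega> \<le> z \<omega>"
    then have "AE \<omega> in M. \<forall>k. w \<omega> \<le> d k \<omega>" unfolding AE_all_countable by auto
    then show "AE \<omega> in M. w \<omega> \<le> 0" using dlim
    proof eventually_elim
      case (elim \<omega>)
      show ?case
      proof (rule ccontr)
        assume "\<not> w \<omega> \<le> 0"
        then obtain k where "d k \<omega> \<le> w \<omega> / 2" using elim(2) by (meson half_gt_zero not_le)
        moreover have "w \<omega> \<le> d k \<omega>" using elim(1) by blast
        ultimately show False using \<open>\<not> w \<omega> \<le> 0\<close> by linarith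
      qed
    qed
  next
    fix zz assume "zz \<in> range d"
    then obtain k where zk: "zz = d k" by auto
    have "\<forall>\<^sub>F n in sequentially. AE \<omega> in M. \<bar>ys n \<omega> - 0\<bar> \<le> d k \<omega>"
      unfolding eventually_sequentially
    proof (intro exI[of _ k] allI impI)
      fix n assume "k \<le> n"
      show "AE \<omega> in M. \<bar>ys n \<omega> - 0\<bar> \<le> d k \<omega>" using all_dom
      proof eventually_elim
        case (elim \<omega>)
        then have "\<bar>ys n \<omega>\<bar> \<le> z \<omega>" by blast
        then have "\<bar>ys n \<omega>\<bar> = min (z \<omega>) \<bar>ys n \<omega>\<bar>" by (simp add: min_def)
        also have "\<dots> \<le> d k \<omega>" unfolding d_def by (rule cSUP_upper[OF _ bdd]) (use \<open>k \<le> n\<close> in simp)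
        finally show ?case by simp
      qed
    qed
    then show "\<forall>\<^sub>F y in F. AE \<omega> in M. \<bar>y \<omega> - 0\<bar> \<le> zz \<omega>"
      unfolding F_def zk eventually_filtermap .
  qed
  have evX: "\<forall>\<^sub>F y in F. y \<in> X" unfolding F_def eventually_filtermap using ys by simp
  have "(\<phi> \<longlongrightarrow> 0) F"
  proof -
    have "\<forall>F. (\<forall>\<^sub>F y in F. y \<in> X) \<longrightarrow> order_conv M X F (\<lambda>_. 0) \<longrightarrow> (\<phi> \<longlongrightarrow> 0) F"
      using phi unfolding order_continuous_functional_def by (rule conjunct2)
    then have "(\<forall>\<^sub>F y in F. y \<in> X) \<longrightarrow> order_conv M X F (\<lambda>_. 0) \<longrightarrow> (\<phi> \<longlongrightarrow> 0) F" by (rule spec)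
    then show ?thesis using evX oc by (rule mp[THEN mp])
  qed
  then have t: "(\<lambda>n. \<phi> (ys n)) \<longlonglongrightarrow> 0"
    unfolding F_def filterlim_filtermap by (simp add: comp_def)
  have lin: "linear_functional_on M X \<phi>" using phi unfolding order_continuous_functional_def by auto
  have mg: "(\<lambda>\<omega>. (-1) * g \<omega>) \<in> X" by (rule X_scale[OF ideal g])
  have "\<phi> (ys n) = \<phi> (gs n) - \<phi> g" for n
  proof -
    have yseq: "ys n = (\<lambda>\<omega>. gs n \<omega> + (\<lambda>\<omega>. (-1) * g \<omega>) \<omega>)" by (simp add: ys_def)
    have l1: "\<forall>x\<in>X. \<forall>y\<in>X. \<phi> (\<lambda>\<omega>. x \<omega> + y \<omega>) = \<phi> x + \<phi> y"
      and l2: "\<forall>c::real. \<forall>x\<in>X. \<phi> (\<lambda>\<omega>. c * x \<omega>) = c * \<phi> x"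
      using lin unfolding linear_functional_on_def by blast+
    have a1: "\<phi> (\<lambda>\<omega>. gs n \<omega> + (-1) * g \<omega>) = \<phi> (gs n) + \<phi> (\<lambda>\<omega>. (-1) * g \<omega>)"
      using bspec[OF bspec[OF l1 gs] mg] .
    have a2: "\<phi> (\<lambda>\<omega>. (-1) * g \<omega>) = (-1) * \<phi> g"
      using bspec[OF spec[OF l2, of "-1"] g] .
    have "\<phi> (ys n) = \<phi> (gs n) + (-1) * \<phi> g"
      unfolding yseq a1 a2 ..
    then show ?thesis by simp
  qed
  with t have "(\<lambda>n. \<phi> (gs n) - \<phi> g) \<longlonglongrightarrow> 0" by simp
  then show ?thesis by (rule LIM_zero_cancel)
qed




lemma hn_bounds:
  fixes s t a :: real assumes s: "s > 0"
  shows "0 \<le> 1 + (- s) * max (t - a) 0 + s * max (t - (a + 1/s)) 0"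
    and "1 + (- s) * max (t - a) 0 + s * max (t - (a + 1/s)) 0 \<le> 1"
proof -
  have "0 \<le> 1 + (- s) * max (t - a) 0 + s * max (t - (a + 1/s)) 0 \<and>
        1 + (- s) * max (t - a) 0 + s * max (t - (a + 1/s)) 0 \<le> 1"
  proof (cases "t \<le> a")
    case True
    then have "t \<le> a + 1/s" using s by (smt (verit) divide_pos_pos)
    with True show ?thesis by simp
  next
    case False
    show ?thesis
    proof (cases "t \<le> a + 1/s")
      case True
      have "s * (t - a) \<le> s * (1/s)" using True s by (intro mult_left_mono) auto
      then have "s * (t - a) \<le> 1" using s by simp
      moreover have "0 \<le> s * (t - a)" using False s by simp
      ultimately show ?thesis using False True by (simp add: max_def)
    next
      case False2: False
      have "1 + (- s) * max (t - a) 0 + s * max (t - (a + 1/s)) 0 = 1 - s * (t-a) + s * (t - a) - s * (1/s)"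
        using False False2 by (simp add: max_def algebra_simps)
      also have "\<dots> = 0" using s by simp
      finally show ?thesis by simp
    qed
  qed
  then show "0 \<le> 1 + (- s) * max (t - a) 0 + s * max (t - (a + 1/s)) 0"
    and "1 + (- s) * max (t - a) 0 + s * max (t - (a + 1/s)) 0 \<le> 1" by auto
qed

lemma hn_eventually:
  fixes t a :: real assumes "t > a"
  shows "\<forall>\<^sub>F n in sequentially. 1 + (- real (Suc n)) * max (t - a) 0 + real (Suc n) * max (t - (a + 1/real (Suc n))) 0 = 0"
proof -
  have "\<exists>N. inverse (real (Suc N)) < t - a" using assms by (intro reals_Archimedean) simp
  then obtain N where N: "inverse (real (Suc N)) < t - a" by blast
  show ?thesis unfolding eventually_sequentially
  proof (intro exI[of _ N] allI impI)
    fix n assume "N \<le> n"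
    then have "1 / real (Suc n) \<le> 1 / real (Suc N)" by (intro divide_left_mono) auto
    then have le: "a + 1 / real (Suc n) \<le> t" using N by (simp add: inverse_eq_divide)
    define s where "s = real (Suc n)"
    have s: "s > 0" by (simp add: s_def)
    have "1 + (- s) * max (t - a) 0 + s * max (t - (a + 1/s)) 0 = 1 - s * (t-a) + s * (t - a) - s * (1/s)"
    proof -
      have le': "a + 1 / s \<le> t" using le by (simp add: s_def)
      moreover have "1/s > 0" using s by simp
      ultimately have "t - (a + 1/s) \<ge> 0" "t - a \<ge> 0" by linarith+
      then show ?thesis by (simp add: max_def algebra_simps)
    qed
    also have "\<dots> = 0" using s by simp
    finally show "1 + (- real (Suc n)) * max (t - a) 0 + real (Suc n) * max (t - (a + 1/real (Suc n))) 0 = 0"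
      by (simp add: s_def)
  qed
qed

lemma main_induction:
  fixes M :: "'a measure" and X Q :: "('a \<Rightarrow> real) set" and f :: "'a \<Rightarrow> real"
  assumes ideal: "is_ideal_L0 M X" and cst: "\<forall>c::real. (\<lambda>_. c) \<in> X" and f: "f \<in> X"
    and sig: "sigma_gen_completed M f = sets M"
    and QX: "Q \<subseteq> X" and OQ: "O_span f \<subseteq> Q"
    and Qadd: "\<And>u v. u \<in> Q \<Longrightarrow> v \<in> Q \<Longrightarrow> (\<lambda>\<omega>. u \<omega> + v \<omega>) \<in> Q"
    and Qscale: "\<And>a u. u \<in> Q \<Longrightarrow> (\<lambda>\<omega>. a * u \<omega>) \<in> Q"
    and Qlim: "\<And>gs g z. (\<And>n. gs n \<in> Q) \<Longrightarrow> g \<in> X \<Longrightarrow> z \<in> X \<Longrightarrow>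
        (\<And>n. AE \<omega> in M. \<bar>gs n \<omega> - g \<omega>\<bar> \<le> z \<omega>) \<Longrightarrow> (AE \<omega> in M. (\<lambda>n. gs n \<omega>) \<longlonglongrightarrow> g \<omega>) \<Longrightarrow> g \<in> Q"
  shows "X \<subseteq> Q"
proof -
  have zeroQ: "(\<lambda>_. 0) \<in> Q" using OQ O_span_zero by blast
  have oneQ: "(\<lambda>_. 1) \<in> Q" using OQ O_span_const1 by blast
  have Qsum: "(\<lambda>\<omega>. \<Sum>i\<in>I. u i \<omega>) \<in> Q" if "finite I" "\<And>i. i \<in> I \<Longrightarrow> u i \<in> Q" for I and u :: "'b \<Rightarrow> 'a \<Rightarrow> real"
    using that
  proof (induction I rule: finite_induct)
    case empty then show ?case using zeroQ by simp
  next
    case (insert i I) then show ?case using Qadd[of "u i" "\<lambda>\<omega>. \<Sum>i\<in>I. u i \<omega>"] by simp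
  qed
  have Qae: "g \<in> Q" if u: "u \<in> Q" and g: "g \<in> X" and ae: "AE \<omega> in M. u \<omega> = g \<omega>" for u g
  proof (rule Qlim[of "\<lambda>_. u" g "\<lambda>_. 0"])
    show "u \<in> Q" "g \<in> X" "(\<lambda>_. 0) \<in> X" using u g X_zero[OF ideal] by auto
    show "AE \<omega> in M. \<bar>u \<omega> - g \<omega>\<bar> \<le> 0" for n::nat using ae by eventually_elim simp
    show "AE \<omega> in M. (\<lambda>n. u \<omega>) \<longlonglongrightarrow> g \<omega>" using ae by eventually_elim simp
  qed
  have fmeas[measurable]: "f \<in> borel_measurable M" using X_meas[OF ideal f] .
  have one: "(\<lambda>_. 1::real) \<in> X" using cst by blast
  have indX: "indicator A \<in> X" if "A \<in> sets M" for A
    by (rule X_dom[OF ideal one]) (use that in \<open>auto intro!: AE_I2 simp: indicator_def\<close>)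
  define G where "G = {f -` {..a} \<inter> space M | a. True} \<union> null_sets M"
  have Gsets: "G \<subseteq> sets M" unfolding G_def by auto
  then have GP: "G \<subseteq> Pow (space M)" using sets.sets_into_space by auto
  have IS: "Int_stable G"
    unfolding Int_stable_def
  proof (intro ballI)
    fix A B assume A: "A \<in> G" and B: "B \<in> G"
    show "A \<inter> B \<in> G"
    proof (cases "A \<in> null_sets M")
      case True
      have "B \<in> sets M" using B Gsets by auto
      with True have "A \<inter> B \<in> null_sets M" by (rule null_set_Int2)
      then show ?thesis unfolding G_def by blast
    next
      case An: False
      then obtain a where a: "A = f -` {..a} \<inter> space M" using A by (auto simp: G_def)
      show ?thesis
      proof (cases "B \<in> null_sets M")
        case True
        have "A \<in> sets M" using A Gsets by auto
        with True have "A \<inter> B \<in> null_sets M" by (rule null_set_Int1)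
        then show ?thesis unfolding G_def by blast
      next
        case False
        then obtain b where b: "B = f -` {..b} \<inter> space M" using B by (auto simp: G_def)
        have "A \<inter> B = f -` {..min a b} \<inter> space M" unfolding a b by auto
        then show ?thesis unfolding G_def by blast
      qed
    qed
  qed
  have sM: "sets M = sigma_sets (space M) G"
  proof
    show "sigma_sets (space M) G \<subseteq> sets M" using Gsets by (rule sets.sigma_sets_subset)
    let ?N = "sigma (space M) G"
    have sN: "sets ?N = sigma_sets (space M) G" using sets_measure_of[OF GP] .
    have spN: "space ?N = space M" using space_measure_of[OF GP] .
    have "f \<in> borel_measurable ?N"
      unfolding borel_measurable_iff_le
    proof
      fix a
      have "{w \<in> space ?N. f w \<le> a} = f -` {..a} \<inter> space M" unfolding spN by auto
      also have "\<dots> \<in> sets ?N" unfolding sN by (rule sigma_sets.Basic) (auto simp: G_def)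
      finally show "{w \<in> space ?N. f w \<le> a} \<in> sets ?N" .
    qed
    then have pre: "f -` B \<inter> space M \<in> sigma_sets (space M) G" if "B \<in> sets borel" for B
      using measurable_sets[OF _ that, of f ?N] sN spN by auto
    have "sets M = sigma_sets (space M) ({f -` B \<inter> space M | B. B \<in> sets borel} \<union> null_sets M)"
      using sig unfolding sigma_gen_completed_def by simp
    also have "\<dots> \<subseteq> sigma_sets (space M) G"
    proof (rule sigma_sets_mono, rule Un_least)
      show "{f -` B \<inter> space M | B. B \<in> sets borel} \<subseteq> sigma_sets (space M) G" using pre by blast
      show "null_sets M \<subseteq> sigma_sets (space M) G"
        by (rule subsetI, rule sigma_sets.Basic) (simp add: G_def)
    qed
    finally show "sets M \<subseteq> sigma_sets (space M) G" .
  qed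
  have indQ': "indicator A \<in> Q" if "A \<in> sigma_sets (space M) G" for A
    using IS GP that
  proof (induction rule: sigma_sets_induct_disjoint)
    case (basic A)
    show ?case
    proof (cases "A \<in> null_sets M")
      case True
      have "AE \<omega> in M. \<omega> \<notin> A" using AE_not_in[OF True] .
      then have "AE \<omega> in M. 0 = indicator A \<omega>" by eventually_elim simp
      then show ?thesis using Qae[OF zeroQ indX] True by auto
    next
      case False
      then obtain a where a: "A = f -` {..a} \<inter> space M" using basic by (auto simp: G_def)
      define gs where "gs n = (\<lambda>\<omega>. 1 + (- real (Suc n)) * max (f \<omega> - a) 0 + real (Suc n) * max (f \<omega> - (a + 1/real (Suc n))) 0)" for n
      have gsO: "gs n \<in> O_span f" for n
        unfolding gs_def
        by (intro O_span_add O_span_scale O_span_gen O_span_const1)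
      show ?thesis
      proof (rule Qlim[of gs _ "\<lambda>_. 1"])
        show "gs n \<in> Q" for n using gsO OQ by auto
        show "indicator A \<in> X" using indX basic Gsets by auto
        show "(\<lambda>_. 1) \<in> X" by (rule one)
        show "AE \<omega> in M. \<bar>gs n \<omega> - indicator A \<omega>\<bar> \<le> 1" for n
        proof (rule AE_I2)
          fix \<omega>
          have s: "real (Suc n) > 0" by simp
          show "\<bar>gs n \<omega> - indicator A \<omega>\<bar> \<le> 1"
            using hn_bounds[OF s, of "f \<omega>" a] unfolding gs_def by (auto simp: indicator_def)
        qed
        show "AE \<omega> in M. (\<lambda>n. gs n \<omega>) \<longlonglongrightarrow> indicator A \<omega>"
        proof (rule AE_I2)
          fix \<omega> assume \<omega>: "\<omega> \<in> space M"
          show "(\<lambda>n. gs n \<omega>) \<longlonglongrightarrow> indicator A \<omega>"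
          proof (cases "f \<omega> \<le> a")
            case True
            then have "gs n \<omega> = 1" for n unfolding gs_def
              using hn_bounds by (simp add: max_def) (smt (verit, del_insts) divide_nonneg_nonneg of_nat_0_le_iff)
            moreover have "indicator A \<omega> = (1::real)" using True \<omega> a by auto
            ultimately show ?thesis by simp
          next
            case False
            have "indicator A \<omega> = (0::real)" using False \<omega> a by auto
            then show ?thesis unfolding gs_def using hn_eventually[of a "f \<omega>"] False
              by (auto intro: tendsto_eventually)
          qed
        qed
      qed
    qed
  next
    case empty
    show ?case using zeroQ by (simp add: fun_eq_iff)
  next
    case (compl A)
    have A: "A \<in> sets M" using compl(1) sM by auto
    have u: "(\<lambda>\<omega>. 1 + (-1) * indicator A \<omega>) \<in> Q" using Qadd[OF oneQ Qscale[OF compl(2), of "-1"]] .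
    show ?case
    proof (rule Qae[OF u])
      show "indicator (space M - A) \<in> X" using indX A by auto
      show "AE \<omega> in M. 1 + - 1 * indicator A \<omega> = (indicator (space M - A) \<omega> :: real)"
        by (rule AE_I2) (simp split: split_indicator)
    qed
  next
    case (union A)
    have Asets: "A i \<in> sets M" for i using union(2) sM by auto
    define gs where "gs n = (\<lambda>\<omega>. \<Sum>i\<in>{..<n}. indicator (A i) \<omega> :: real)" for n
    show ?case
    proof (rule Qlim[of gs _ "\<lambda>_. 1"])
      show "gs n \<in> Q" for n unfolding gs_def by (rule Qsum) (use union(3) in auto)
      show "indicator (\<Union>i. A i) \<in> X" using indX Asets by auto
      show "(\<lambda>_. 1) \<in> X" by (rule one)
      show "AE \<omega> in M. \<bar>gs n \<omega> - indicator (\<Union>i. A i) \<omega>\<bar> \<le> 1" for n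
      proof (rule AE_I2)
        fix \<omega>
        have "gs n \<omega> = indicator (\<Union>(A ` {..<n})) \<omega>" unfolding gs_def
          by (rule indicator_UN_disjoint[symmetric]) (use union(1) in \<open>auto intro: disjoint_family_on_mono\<close>)
        then show "\<bar>gs n \<omega> - indicator (\<Union>i. A i) \<omega>\<bar> \<le> 1" by (simp add: indicator_def)
      qed
      have dj: "A i \<inter> A j = {}" if "i \<noteq> j" for i j
        using union(1) that unfolding disjoint_family_on_def by auto
      show "AE \<omega> in M. (\<lambda>n. gs n \<omega>) \<longlonglongrightarrow> indicator (\<Union>i. A i) \<omega>"
        by (rule AE_I2) (use indicator_sums[OF dj] in \<open>auto simp: sums_def gs_def\<close>)
    qed
  qed
  have indQ: "indicator A \<in> Q" if "A \<in> sets M" for A using indQ' that sM by auto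
  have simpQ: "s \<in> Q" if s: "simple_function M s" for s
  proof -
    have sm[measurable]: "s \<in> borel_measurable M" using borel_measurable_simple_function[OF s] .
    have fin: "finite (s ` space M)" using simple_functionD(1)[OF s] .
    define B where "B = Max (abs ` s ` space M)"
    have BX: "(\<lambda>_. B) \<in> X" using cst by blast
    have sB: "\<bar>s \<omega>\<bar> \<le> B" if "\<omega> \<in> space M" for \<omega>
      unfolding B_def by (rule Max_ge) (use fin that in auto)
    have "\<bar>s \<omega>\<bar> \<le> \<bar>B\<bar>" if "\<omega> \<in> space M" for \<omega>
      using abs_ge_self[of B] sB[OF that] by linarith
    then have sBae: "AE \<omega> in M. \<bar>s \<omega>\<bar> \<le> \<bar>B\<bar>" by (rule AE_I2)
    have sX: "s \<in> X" using X_dom[OF ideal BX sm] sBae by simp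
    have u: "(\<lambda>\<omega>. \<Sum>y\<in>s ` space M. y * indicator (s -` {y} \<inter> space M) \<omega>) \<in> Q"
      by (rule Qsum[OF fin]) (rule Qscale, rule indQ, rule simple_functionD(2)[OF s])
    show ?thesis
    proof (rule Qae[OF u sX])
      show "AE \<omega> in M. (\<Sum>y\<in>s ` space M. y * indicator (s -` {y} \<inter> space M) \<omega>) = s \<omega>"
        using simple_function_indicator_representation_AE[OF s]
      proof eventually_elim
        case (elim \<omega>)
        have "(\<Sum>y\<in>s ` space M. y * indicator (s -` {y} \<inter> space M) \<omega>) =
              (\<Sum>y\<in>s ` space M. indicator (s -` {y} \<inter> space M) \<omega> *\<^sub>R y)"
          by (intro sum.cong refl) (simp add: mult.commute)
        then show ?case using elim by linarith
      qed
    qed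
  qed
  show ?thesis
  proof
    fix g assume g: "g \<in> X"
    have [measurable]: "g \<in> borel_measurable M" using X_meas[OF ideal g] .
    have gm: "g \<in> borel_measurable M" using X_meas[OF ideal g] .
    from borel_measurable_implies_sequence_metric[OF gm, of 0]
    obtain F where F0: "\<forall>i. simple_function M (F i)" "\<forall>x\<in>space M. (\<lambda>i. F i x) \<longlonglongrightarrow> g x"
      "\<forall>i. \<forall>x\<in>space M. dist (F i x) 0 \<le> 2 * dist (g x) 0"
      by blast
    have F: "\<And>i. simple_function M (F i)" "\<And>x. x \<in> space M \<Longrightarrow> (\<lambda>i. F i x) \<longlonglongrightarrow> g x"
      "\<And>i x. x \<in> space M \<Longrightarrow> dist (F i x) 0 \<le> 2 * dist (g x) 0"
      using F0 by auto
    show "g \<in> Q"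
    proof (rule Qlim[of F g "\<lambda>\<omega>. 3 * \<bar>g \<omega>\<bar>"])
      show "F n \<in> Q" for n using simpQ F(1) by auto
      show "g \<in> X" by fact
      show "(\<lambda>\<omega>. 3 * \<bar>g \<omega>\<bar>) \<in> X"
        by (rule X_dom[OF ideal X_scale[OF ideal g, of 3]]) auto
      show "AE \<omega> in M. \<bar>F n \<omega> - g \<omega>\<bar> \<le> 3 * \<bar>g \<omega>\<bar>" for n
      proof (rule AE_I2)
        fix \<omega> assume "\<omega> \<in> space M"
        then have "\<bar>F n \<omega>\<bar> \<le> 2 * \<bar>g \<omega>\<bar>" using F(3)[of \<omega> n] by (simp add: dist_real_def)
        then show "\<bar>F n \<omega> - g \<omega>\<bar> \<le> 3 * \<bar>g \<omega>\<bar>" using abs_triangle_ineq4[of "F n \<omega>" "g \<omega>"] by linarith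
      qed
      show "AE \<omega> in M. (\<lambda>n. F n \<omega>) \<longlonglongrightarrow> g \<omega>" by (rule AE_I2) (rule F(2))
    qed
  qed
qed




lemma min_tri: "min 1 \<bar>x + y\<bar> \<le> min 1 \<bar>x\<bar> + min 1 \<bar>y::real\<bar>"
  by (smt (verit, best))

lemma min_scale: "min 1 \<bar>a * x\<bar> \<le> (\<bar>a\<bar> + 1) * min 1 \<bar>x::real\<bar>"
proof (cases "\<bar>x\<bar> \<le> 1")
  case True
  have "min 1 \<bar>a * x\<bar> \<le> \<bar>a\<bar> * \<bar>x\<bar>" by (simp add: abs_mult)
  also have "\<dots> \<le> (\<bar>a\<bar> + 1) * \<bar>x\<bar>" by (simp add: mult_right_mono)
  finally show ?thesis using True by (simp add: min_def)
next
  case False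
  have "min 1 \<bar>a * x\<bar> \<le> 1" by simp
  also have "\<dots> \<le> \<bar>a\<bar> + 1" by simp
  also have "\<dots> = (\<bar>a\<bar> + 1) * min 1 \<bar>x\<bar>" using False by (simp add: min_def)
  finally show ?thesis .
qed

lemma ae_lim_zero:
  fixes h :: "nat \<Rightarrow> 'a \<Rightarrow> real"
  assumes hm[measurable]: "\<And>n. h n \<in> borel_measurable M" and nn: "\<And>n \<omega>. 0 \<le> h n \<omega>"
    and int: "\<And>n. integrable M (h n)" and small: "\<And>n. integral\<^sup>L M (h n) \<le> (1/2)^n"
  shows "AE \<omega> in M. (\<lambda>n. h n \<omega>) \<longlonglongrightarrow> 0"
proof -
  have "(\<integral>\<^sup>+\<omega>. (\<Sum>n. ennreal (h n \<omega>)) \<partial>M) = (\<Sum>n. \<integral>\<^sup>+\<omega>. ennreal (h n \<omega>) \<partial>M)"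
    by (rule nn_integral_suminf) measurable
  also have "\<dots> = (\<Sum>n. ennreal (integral\<^sup>L M (h n)))"
    using nn_integral_eq_integral[OF int] nn by simp
  also have "\<dots> \<le> (\<Sum>n. ennreal ((1/2)^n))"
    using small by (intro suminf_le) (auto intro: summableI)
  also have "\<dots> = ennreal (\<Sum>n. (1/2::real)^n)"
    by (rule suminf_ennreal2) (auto intro: summable_geometric)
  finally have "(\<integral>\<^sup>+\<omega>. (\<Sum>n. ennreal (h n \<omega>)) \<partial>M) \<noteq> \<infinity>"
    using neq_top_trans by force
  then have "AE \<omega> in M. (\<Sum>n. ennreal (h n \<omega>)) \<noteq> \<infinity>"
    by (intro nn_integral_PInf_AE) measurable
  then show ?thesis
  proof eventually_elim
    case (elim \<omega>)
    then have "summable (\<lambda>n. h n \<omega>)" using nn by (intro summable_suminf_not_top) auto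
    then show ?case by (rule summable_LIMSEQ_zero)
  qed
qed

lemma nbhd:
  assumes "generate_topology_on (insert X {{x \<in> X. \<phi> x \<in> U} | \<phi> U. \<phi> \<in> order_dual_n M X \<and> open U}) T"
    and "g \<in> T"
  shows "\<exists>\<Phi> \<epsilon>. finite \<Phi> \<and> \<Phi> \<subseteq> order_dual_n M X \<and> \<epsilon> > 0 \<and>
           (\<forall>y\<in>X. (\<forall>\<phi>\<in>\<Phi>. \<bar>\<phi> y - \<phi> g\<bar> < \<epsilon>) \<longrightarrow> y \<in> T)"
  using assms
proof (induction)
  case Empty
  then show ?case by simp
next
  case (Int a b)
  have ga: "g \<in> a" and gb: "g \<in> b" using Int.prems by auto
  from Int.IH(1)[OF ga] Int.IH(2)[OF gb] obtain \<Phi>1 e1 \<Phi>2 e2 where 1: "finite \<Phi>1" "\<Phi>1 \<subseteq> order_dual_n M X" "e1 > 0"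
      "\<forall>y\<in>X. (\<forall>\<phi>\<in>\<Phi>1. \<bar>\<phi> y - \<phi> g\<bar> < e1) \<longrightarrow> y \<in> a"
    and 2: "finite \<Phi>2" "\<Phi>2 \<subseteq> order_dual_n M X" "e2 > 0"
      "\<forall>y\<in>X. (\<forall>\<phi>\<in>\<Phi>2. \<bar>\<phi> y - \<phi> g\<bar> < e2) \<longrightarrow> y \<in> b"
    by blast
  have all: "\<forall>y\<in>X. (\<forall>\<phi>\<in>\<Phi>1 \<union> \<Phi>2. \<bar>\<phi> y - \<phi> g\<bar> < min e1 e2) \<longrightarrow> y \<in> a \<inter> b"
  proof (intro ballI impI)
    fix y assume y: "y \<in> X" and h: "\<forall>\<phi>\<in>\<Phi>1 \<union> \<Phi>2. \<bar>\<phi> y - \<phi> g\<bar> < min e1 e2"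
    have "\<forall>\<phi>\<in>\<Phi>1. \<bar>\<phi> y - \<phi> g\<bar> < e1" using h by simp
    then have ya: "y \<in> a" using 1(4) y by blast
    have "\<forall>\<phi>\<in>\<Phi>2. \<bar>\<phi> y - \<phi> g\<bar> < e2" using h by simp
    then have yb: "y \<in> b" using 2(4) y by blast
    show "y \<in> a \<inter> b" using ya yb by blast
  qed
  show ?case
  proof (intro exI[of _ "\<Phi>1 \<union> \<Phi>2"] exI[of _ "min e1 e2"] conjI)
    show "finite (\<Phi>1 \<union> \<Phi>2)" using 1(1) 2(1) by simp
    show "\<Phi>1 \<union> \<Phi>2 \<subseteq> order_dual_n M X" using 1(2) 2(2) by simp
    show "min e1 e2 > 0" using 1(3) 2(3) by simp
  qed (rule all)
next
  case (UN K)
  from UN.prems obtain k where k: "k \<in> K" "g \<in> k" by blast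
  from UN.IH[OF k] obtain \<Phi> e where "finite \<Phi>" "\<Phi> \<subseteq> order_dual_n M X" "e > 0"
      "\<forall>y\<in>X. (\<forall>\<phi>\<in>\<Phi>. \<bar>\<phi> y - \<phi> g\<bar> < e) \<longrightarrow> y \<in> k" by blast
  moreover have "k \<subseteq> \<Union>K" using k by blast
  ultimately have "\<forall>y\<in>X. (\<forall>\<phi>\<in>\<Phi>. \<bar>\<phi> y - \<phi> g\<bar> < e) \<longrightarrow> y \<in> \<Union>K" by blast
  then show ?case using \<open>finite \<Phi>\<close> \<open>\<Phi> \<subseteq> order_dual_n M X\<close> \<open>e > 0\<close>
    by (intro exI[of _ \<Phi>] exI[of _ e]) simp
next
  case (Basis s)
  show ?case
  proof (cases "s = X")
    case True
    then show ?thesis by (intro exI[of _ "{}"] exI[of _ 1]) auto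
  next
    case False
    then obtain \<phi> U where s: "s = {x \<in> X. \<phi> x \<in> U}" "\<phi> \<in> order_dual_n M X" "open U"
      using Basis.hyps by auto
    then have "\<phi> g \<in> U" using Basis.prems by auto
    then obtain e where e: "e > 0" "\<And>y. dist y (\<phi> g) < e \<Longrightarrow> y \<in> U"
      using s(3) unfolding open_dist by blast
    have "\<forall>y\<in>X. (\<forall>\<psi>\<in>{\<phi>}. \<bar>\<psi> y - \<psi> g\<bar> < e) \<longrightarrow> y \<in> s"
    proof (intro ballI impI)
      fix y assume y: "y \<in> X" and h: "\<forall>\<psi>\<in>{\<phi>}. \<bar>\<psi> y - \<psi> g\<bar> < e"
      then have "dist (\<phi> y) (\<phi> g) < e" by (simp add: dist_real_def)
      then have "\<phi> y \<in> U" by (rule e(2))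
      then show "y \<in> s" using y s(1) by simp
    qed
    then show ?thesis using s(2) e(1)
      by (intro exI[of _ "{\<phi>}"] exI[of _ e]) simp
  qed
qed




lemma lin_of_dual: "\<phi> \<in> order_dual_n M X \<Longrightarrow> linear_functional_on M X \<phi>"
  unfolding order_dual_n_def order_continuous_functional_def by auto

lemma lin_add: "linear_functional_on M X \<phi> \<Longrightarrow> x \<in> X \<Longrightarrow> y \<in> X \<Longrightarrow> \<phi> (\<lambda>\<omega>. x \<omega> + y \<omega>) = \<phi> x + \<phi> y"
  unfolding linear_functional_on_def by blast

lemma lin_scale: "linear_functional_on M X \<phi> \<Longrightarrow> x \<in> X \<Longrightarrow> \<phi> (\<lambda>\<omega>. c * x \<omega>) = c * \<phi> x"
  unfolding linear_functional_on_def by blast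

theorem corollary3p2:
  fixes M :: "'a measure" and X :: "('a \<Rightarrow> real) set" and f :: "'a \<Rightarrow> real"
  assumes "prob_space M"
    and "is_ideal_L0 M X"
    and "\<forall>c::real. (\<lambda>_. c) \<in> X"
    and "\<exists>\<phi>. order_continuous_functional M X \<phi> \<and> strictly_positive_functional M X \<phi>"
    and "f \<in> X"
    and "AE \<omega> in M. 0 \<le> f \<omega>"
    and "sigma_gen_completed M f = sets M"
  shows "(weak_topology_n M X) closure_of (O_span f) = X \<and>
         (\<forall>g\<in>X. \<exists>gn :: nat \<Rightarrow> 'a \<Rightarrow> real. (\<forall>n. gn n \<in> O_span f) \<and>
           (AE \<omega> in M. (\<lambda>n. gn n \<omega>) \<longlonglongrightarrow> g \<omega>))"
proof -
  note ideal = assms(2) and cst = assms(3) and f = assms(5) and sig = assms(7)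
  interpret prob_space M by (rule assms(1))
  have OX: "u \<in> X" if "u \<in> O_span f" for u using O_span_X[OF ideal cst f that] .
  define Qa where "Qa = {g \<in> X. \<forall>\<Phi>. finite \<Phi> \<longrightarrow> \<Phi> \<subseteq> order_dual_n M X \<longrightarrow>
      (\<forall>\<epsilon>>0. \<exists>u\<in>O_span f. \<forall>\<phi>\<in>\<Phi>. \<bar>\<phi> u - \<phi> g\<bar> < \<epsilon>)}"
  have Qa_get: "\<exists>u'\<in>O_span f. \<forall>\<phi>\<in>\<Phi>. \<bar>\<phi> u' - \<phi> u\<bar> < \<epsilon>"
    if "u \<in> Qa" "finite \<Phi>" "\<Phi> \<subseteq> order_dual_n M X" "\<epsilon> > 0" for u \<Phi> \<epsilon>
  proof -
    have "\<forall>\<Phi>. finite \<Phi> \<longrightarrow> \<Phi> \<subseteq> order_dual_n M X \<longrightarrow>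
      (\<forall>\<epsilon>>0. \<exists>u'\<in>O_span f. \<forall>\<phi>\<in>\<Phi>. \<bar>\<phi> u' - \<phi> u\<bar> < \<epsilon>)"
      using that(1) unfolding Qa_def by blast
    from this[rule_format, OF that(2,3) that(4)] show ?thesis .
  qed
  have XQa: "X \<subseteq> Qa"
  proof (rule main_induction[OF ideal cst f sig])
    show "Qa \<subseteq> X" unfolding Qa_def by auto
    show "O_span f \<subseteq> Qa" unfolding Qa_def
    proof (intro subsetI CollectI conjI allI impI)
      fix u assume u: "u \<in> O_span f"
      then show "u \<in> X" by (rule OX)
    next
      fix u :: "'a \<Rightarrow> real" and \<Phi> :: "(('a \<Rightarrow> real) \<Rightarrow> real) set" and \<epsilon> :: real
      assume "u \<in> O_span f" "finite \<Phi>" "\<Phi> \<subseteq> order_dual_n M X" "\<epsilon> > 0"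
      then show "\<exists>w\<in>O_span f. \<forall>\<phi>\<in>\<Phi>. \<bar>\<phi> w - \<phi> u\<bar> < \<epsilon>" by (intro bexI[of _ u]) auto
    qed
  next
    fix u v assume u: "u \<in> Qa" and v: "v \<in> Qa"
    show "(\<lambda>\<omega>. u \<omega> + v \<omega>) \<in> Qa" unfolding Qa_def
    proof (intro CollectI conjI allI impI)
      show "(\<lambda>\<omega>. u \<omega> + v \<omega>) \<in> X" using u v X_add[OF ideal] unfolding Qa_def by auto
      fix \<Phi> :: "(('a \<Rightarrow> real) \<Rightarrow> real) set" and \<epsilon> :: real
      assume \<Phi>: "finite \<Phi>" "\<Phi> \<subseteq> order_dual_n M X" and e: "\<epsilon> > 0"
      obtain u' where u': "u' \<in> O_span f" "\<forall>\<phi>\<in>\<Phi>. \<bar>\<phi> u' - \<phi> u\<bar> < \<epsilon>/2"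
        using Qa_get[OF u \<Phi>, of "\<epsilon>/2"] e by auto
      obtain v' where v': "v' \<in> O_span f" "\<forall>\<phi>\<in>\<Phi>. \<bar>\<phi> v' - \<phi> v\<bar> < \<epsilon>/2"
        using Qa_get[OF v \<Phi>, of "\<epsilon>/2"] e by auto
      have uX: "u \<in> X" "v \<in> X" using u v unfolding Qa_def by auto
      show "\<exists>w\<in>O_span f. \<forall>\<phi>\<in>\<Phi>. \<bar>\<phi> w - \<phi> (\<lambda>\<omega>. u \<omega> + v \<omega>)\<bar> < \<epsilon>"
      proof (intro bexI[of _ "\<lambda>\<omega>. u' \<omega> + v' \<omega>"] ballI)
        show "(\<lambda>\<omega>. u' \<omega> + v' \<omega>) \<in> O_span f" using O_span_add u'(1) v'(1) .
        fix \<phi> assume p: "\<phi> \<in> \<Phi>"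
        then have l: "linear_functional_on M X \<phi>" using \<Phi> lin_of_dual by auto
        have eq: "\<phi> (\<lambda>\<omega>. u' \<omega> + v' \<omega>) - \<phi> (\<lambda>\<omega>. u \<omega> + v \<omega>) = (\<phi> u' - \<phi> u) + (\<phi> v' - \<phi> v)"
          using lin_add[OF l OX[OF u'(1)] OX[OF v'(1)]] lin_add[OF l uX] by simp
        have a: "\<bar>\<phi> u' - \<phi> u\<bar> < \<epsilon>/2" "\<bar>\<phi> v' - \<phi> v\<bar> < \<epsilon>/2" using u'(2) v'(2) p by blast+
        show "\<bar>\<phi> (\<lambda>\<omega>. u' \<omega> + v' \<omega>) - \<phi> (\<lambda>\<omega>. u \<omega> + v \<omega>)\<bar> < \<epsilon>"
          unfolding eq using abs_triangle_ineq[of "\<phi> u' - \<phi> u" "\<phi> v' - \<phi> v"] a by linarith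
      qed
    qed
  next
    fix a :: real and u assume u: "u \<in> Qa"
    show "(\<lambda>\<omega>. a * u \<omega>) \<in> Qa" unfolding Qa_def
    proof (intro CollectI conjI allI impI)
      have uX: "u \<in> X" using u unfolding Qa_def by auto
      show "(\<lambda>\<omega>. a * u \<omega>) \<in> X" using X_scale[OF ideal uX] .
      fix \<Phi> :: "(('a \<Rightarrow> real) \<Rightarrow> real) set" and \<epsilon> :: real
      assume \<Phi>: "finite \<Phi>" "\<Phi> \<subseteq> order_dual_n M X" and e: "\<epsilon> > 0"
      have e': "\<epsilon> / (\<bar>a\<bar> + 1) > 0" using e by simp
      obtain u' where u': "u' \<in> O_span f" "\<forall>\<phi>\<in>\<Phi>. \<bar>\<phi> u' - \<phi> u\<bar> < \<epsilon> / (\<bar>a\<bar> + 1)"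
        using Qa_get[OF u \<Phi> e'] by blast
      show "\<exists>w\<in>O_span f. \<forall>\<phi>\<in>\<Phi>. \<bar>\<phi> w - \<phi> (\<lambda>\<omega>. a * u \<omega>)\<bar> < \<epsilon>"
      proof (intro bexI[of _ "\<lambda>\<omega>. a * u' \<omega>"] ballI)
        show "(\<lambda>\<omega>. a * u' \<omega>) \<in> O_span f" using O_span_scale u'(1) .
        fix \<phi> assume p: "\<phi> \<in> \<Phi>"
        then have l: "linear_functional_on M X \<phi>" using \<Phi> lin_of_dual by auto
        have "\<bar>\<phi> (\<lambda>\<omega>. a * u' \<omega>) - \<phi> (\<lambda>\<omega>. a * u \<omega>)\<bar> = \<bar>a\<bar> * \<bar>\<phi> u' - \<phi> u\<bar>"
          using lin_scale[OF l OX[OF u'(1)]] lin_scale[OF l uX]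
          by (simp add: abs_mult[symmetric] right_diff_distrib)
        also have "\<dots> \<le> (\<bar>a\<bar> + 1) * \<bar>\<phi> u' - \<phi> u\<bar>" by (simp add: mult_right_mono)
        also have "\<dots> < (\<bar>a\<bar> + 1) * (\<epsilon> / (\<bar>a\<bar> + 1))"
          using u'(2) p by (intro mult_strict_left_mono) auto
        also have "\<dots> = \<epsilon>" by simp
        finally show "\<bar>\<phi> (\<lambda>\<omega>. a * u' \<omega>) - \<phi> (\<lambda>\<omega>. a * u \<omega>)\<bar> < \<epsilon>" .
      qed
    qed
  next
    fix gs g z assume gs: "\<And>n. gs n \<in> Qa" and g: "g \<in> X" and z: "z \<in> X"
      and dom: "\<And>n. AE \<omega> in M. \<bar>gs n \<omega> - g \<omega>\<bar> \<le> z \<omega>"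
      and lim: "AE \<omega> in M. (\<lambda>n. gs n \<omega>) \<longlonglongrightarrow> g \<omega>"
    have gsX: "gs n \<in> X" for n using gs unfolding Qa_def by auto
    show "g \<in> Qa" unfolding Qa_def
    proof (intro CollectI conjI allI impI g)
      fix \<Phi> :: "(('a \<Rightarrow> real) \<Rightarrow> real) set" and \<epsilon> :: real
      assume \<Phi>: "finite \<Phi>" "\<Phi> \<subseteq> order_dual_n M X" and e: "\<epsilon> > 0"
      have conv: "(\<lambda>n. \<phi> (gs n)) \<longlonglongrightarrow> \<phi> g" if "\<phi> \<in> \<Phi>" for \<phi>
        using OC[OF ideal _ gsX g z dom lim] that \<Phi> unfolding order_dual_n_def by auto
      have "\<forall>\<^sub>F n in sequentially. \<forall>\<phi>\<in>\<Phi>. \<bar>\<phi> (gs n) - \<phi> g\<bar> < \<epsilon>/2"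
        using \<Phi>(1)
      proof (rule eventually_ball_finite, intro ballI)
        fix \<phi> assume "\<phi> \<in> \<Phi>"
        have e2: "\<epsilon>/2 > 0" using e by simp
        from tendstoD[OF conv[OF \<open>\<phi> \<in> \<Phi>\<close>] e2] show "\<forall>\<^sub>F n in sequentially. \<bar>\<phi> (gs n) - \<phi> g\<bar> < \<epsilon>/2"
          by (simp add: dist_real_def)
      qed
      then obtain N where N: "\<forall>\<phi>\<in>\<Phi>. \<bar>\<phi> (gs N) - \<phi> g\<bar> < \<epsilon>/2"
        unfolding eventually_sequentially by blast
      obtain u' where u': "u' \<in> O_span f" "\<forall>\<phi>\<in>\<Phi>. \<bar>\<phi> u' - \<phi> (gs N)\<bar> < \<epsilon>/2"
        using Qa_get[OF gs[of N] \<Phi>, of "\<epsilon>/2"] e by auto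
      show "\<exists>w\<in>O_span f. \<forall>\<phi>\<in>\<Phi>. \<bar>\<phi> w - \<phi> g\<bar> < \<epsilon>"
      proof (intro bexI[of _ u'] ballI u'(1))
        fix \<phi> assume "\<phi> \<in> \<Phi>"
        then have a: "\<bar>\<phi> (gs N) - \<phi> g\<bar> < \<epsilon>/2" "\<bar>\<phi> u' - \<phi> (gs N)\<bar> < \<epsilon>/2" using N u'(2) by blast+
        show "\<bar>\<phi> u' - \<phi> g\<bar> < \<epsilon>"
          using abs_triangle_ineq[of "\<phi> u' - \<phi> (gs N)" "\<phi> (gs N) - \<phi> g"] a by linarith
      qed
    qed
  qed
  have top: "topspace (weak_topology_n M X) = X"
    unfolding weak_topology_n_def topology_generated_by_topspace by auto
  have partA: "(weak_topology_n M X) closure_of (O_span f) = X"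
  proof
    show "(weak_topology_n M X) closure_of (O_span f) \<subseteq> X"
      using closure_of_subset_topspace top by metis
    show "X \<subseteq> (weak_topology_n M X) closure_of (O_span f)"
    proof
      fix g assume g: "g \<in> X"
      show "g \<in> (weak_topology_n M X) closure_of (O_span f)"
        unfolding in_closure_of
      proof (intro conjI allI impI)
        show "g \<in> topspace (weak_topology_n M X)" using g top by simp
        fix T assume T: "g \<in> T \<and> openin (weak_topology_n M X) T"
        then have gT: "g \<in> T" and oT: "openin (weak_topology_n M X) T" by simp_all
        from oT have "generate_topology_on (insert X {{x \<in> X. \<phi> x \<in> U} | \<phi> U. \<phi> \<in> order_dual_n M X \<and> open U}) T"
          unfolding weak_topology_n_def by (rule openin_topology_generated_by)
        from nbhd[OF this gT] obtain \<Phi> e where ne: "finite \<Phi>" "\<Phi> \<subseteq> order_dual_n M X" "e > 0"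
          "\<forall>y\<in>X. (\<forall>\<phi>\<in>\<Phi>. \<bar>\<phi> y - \<phi> g\<bar> < e) \<longrightarrow> y \<in> T" by blast
        obtain u where u: "u \<in> O_span f" "\<forall>\<phi>\<in>\<Phi>. \<bar>\<phi> u - \<phi> g\<bar> < e"
          using Qa_get[OF _ ne(1,2,3)] XQa g by blast
        show "\<exists>y. y \<in> O_span f \<and> y \<in> T" using u ne OX[OF u(1)] by blast
      qed
    qed
  qed
  have intg: "integrable M (\<lambda>\<omega>. min 1 \<bar>u \<omega> - g \<omega>\<bar>)" if "u \<in> X" "g \<in> X" for u g
  proof -
    have [measurable]: "u \<in> borel_measurable M" "g \<in> borel_measurable M"
      using X_meas[OF ideal] that by auto
    show ?thesis by (rule integrable_const_bound[where B=1]) auto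
  qed
  define Qb where "Qb = {g \<in> X. \<forall>\<epsilon>>0. \<exists>u\<in>O_span f. (\<integral>\<omega>. min 1 \<bar>u \<omega> - g \<omega>\<bar> \<partial>M) < \<epsilon>}"
  have Qb_get: "\<exists>u'\<in>O_span f. (\<integral>\<omega>. min 1 \<bar>u' \<omega> - u \<omega>\<bar> \<partial>M) < \<epsilon>"
    if "u \<in> Qb" "\<epsilon> > 0" for u \<epsilon>
  proof -
    have "\<forall>\<epsilon>>0. \<exists>u'\<in>O_span f. (\<integral>\<omega>. min 1 \<bar>u' \<omega> - u \<omega>\<bar> \<partial>M) < \<epsilon>"
      using that(1) unfolding Qb_def by blast
    from this[rule_format, OF that(2)] show ?thesis .
  qed
  have XQb: "X \<subseteq> Qb"
  proof (rule main_induction[OF ideal cst f sig])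
    show "Qb \<subseteq> X" unfolding Qb_def by auto
    show "O_span f \<subseteq> Qb" unfolding Qb_def
    proof (intro subsetI CollectI conjI allI impI)
      fix u assume u: "u \<in> O_span f"
      then show "u \<in> X" by (rule OX)
    next
      fix u :: "'a \<Rightarrow> real" and \<epsilon> :: real
      assume "u \<in> O_span f" "\<epsilon> > 0"
      then show "\<exists>w\<in>O_span f. (\<integral>\<omega>. min 1 \<bar>w \<omega> - u \<omega>\<bar> \<partial>M) < \<epsilon>" by (intro bexI[of _ u]) auto
    qed
  next
    fix u v assume u: "u \<in> Qb" and v: "v \<in> Qb"
    have uX: "u \<in> X" "v \<in> X" using u v unfolding Qb_def by auto
    show "(\<lambda>\<omega>. u \<omega> + v \<omega>) \<in> Qb" unfolding Qb_def
    proof (intro CollectI conjI allI impI)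
      show "(\<lambda>\<omega>. u \<omega> + v \<omega>) \<in> X" using uX X_add[OF ideal] by auto
      fix \<epsilon> :: real assume e: "\<epsilon> > 0"
      obtain u' where u': "u' \<in> O_span f" "(\<integral>\<omega>. min 1 \<bar>u' \<omega> - u \<omega>\<bar> \<partial>M) < \<epsilon>/2"
        using Qb_get[OF u, of "\<epsilon>/2"] e by auto
      obtain v' where v': "v' \<in> O_span f" "(\<integral>\<omega>. min 1 \<bar>v' \<omega> - v \<omega>\<bar> \<partial>M) < \<epsilon>/2"
        using Qb_get[OF v, of "\<epsilon>/2"] e by auto
      have i1: "integrable M (\<lambda>\<omega>. min 1 \<bar>u' \<omega> - u \<omega>\<bar>)" using intg OX u'(1) uX by auto
      have i2: "integrable M (\<lambda>\<omega>. min 1 \<bar>v' \<omega> - v \<omega>\<bar>)" using intg OX v'(1) uX by auto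
      have i3: "integrable M (\<lambda>\<omega>. min 1 \<bar>(u' \<omega> + v' \<omega>) - (u \<omega> + v \<omega>)\<bar>)"
        using intg[of "\<lambda>\<omega>. u' \<omega> + v' \<omega>" "\<lambda>\<omega>. u \<omega> + v \<omega>"] X_add[OF ideal] OX u'(1) v'(1) uX by auto
      have "(\<integral>\<omega>. min 1 \<bar>(u' \<omega> + v' \<omega>) - (u \<omega> + v \<omega>)\<bar> \<partial>M) \<le>
            (\<integral>\<omega>. min 1 \<bar>u' \<omega> - u \<omega>\<bar> + min 1 \<bar>v' \<omega> - v \<omega>\<bar> \<partial>M)"
        using i1 i2 i3 min_tri by (intro integral_mono) (auto simp: algebra_simps)
      also have "\<dots> = (\<integral>\<omega>. min 1 \<bar>u' \<omega> - u \<omega>\<bar> \<partial>M) + (\<integral>\<omega>. min 1 \<bar>v' \<omega> - v \<omega>\<bar> \<partial>M)"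
        using i1 i2 by (rule Bochner_Integration.integral_add)
      also have "\<dots> < \<epsilon>" using u'(2) v'(2) by simp
      finally show "\<exists>w\<in>O_span f. (\<integral>\<omega>. min 1 \<bar>w \<omega> - (u \<omega> + v \<omega>)\<bar> \<partial>M) < \<epsilon>"
        using O_span_add[OF u'(1) v'(1)] by (intro bexI[of _ "\<lambda>\<omega>. u' \<omega> + v' \<omega>"]) simp_all
    qed
  next
    fix a :: real and u assume u: "u \<in> Qb"
    have uX: "u \<in> X" using u unfolding Qb_def by auto
    show "(\<lambda>\<omega>. a * u \<omega>) \<in> Qb" unfolding Qb_def
    proof (intro CollectI conjI allI impI)
      show "(\<lambda>\<omega>. a * u \<omega>) \<in> X" using X_scale[OF ideal uX] .
      fix \<epsilon> :: real assume e: "\<epsilon> > 0"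
      have e': "\<epsilon> / (\<bar>a\<bar> + 1) > 0" using e by simp
      obtain u' where u': "u' \<in> O_span f" "(\<integral>\<omega>. min 1 \<bar>u' \<omega> - u \<omega>\<bar> \<partial>M) < \<epsilon> / (\<bar>a\<bar> + 1)"
        using Qb_get[OF u e'] by blast
      have i1: "integrable M (\<lambda>\<omega>. min 1 \<bar>u' \<omega> - u \<omega>\<bar>)" using intg OX u'(1) uX by auto
      have i3: "integrable M (\<lambda>\<omega>. min 1 \<bar>a * u' \<omega> - a * u \<omega>\<bar>)"
        using intg[of "\<lambda>\<omega>. a * u' \<omega>" "\<lambda>\<omega>. a * u \<omega>"] X_scale[OF ideal] OX u'(1) uX by auto
      have "(\<integral>\<omega>. min 1 \<bar>a * u' \<omega> - a * u \<omega>\<bar> \<partial>M) \<le> (\<integral>\<omega>. (\<bar>a\<bar> + 1) * min 1 \<bar>u' \<omega> - u \<omega>\<bar> \<partial>M)"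
        using i1 i3 min_scale by (intro integral_mono) (auto simp: right_diff_distrib[symmetric])
      also have "\<dots> = (\<bar>a\<bar> + 1) * (\<integral>\<omega>. min 1 \<bar>u' \<omega> - u \<omega>\<bar> \<partial>M)" by simp
      also have "\<dots> < (\<bar>a\<bar> + 1) * (\<epsilon> / (\<bar>a\<bar> + 1))"
        using u'(2) by (intro mult_strict_left_mono) auto
      also have "\<dots> = \<epsilon>" by simp
      finally show "\<exists>w\<in>O_span f. (\<integral>\<omega>. min 1 \<bar>w \<omega> - a * u \<omega>\<bar> \<partial>M) < \<epsilon>"
        using O_span_scale[OF u'(1)] by (intro bexI[of _ "\<lambda>\<omega>. a * u' \<omega>"]) simp_all
    qed
  next
    fix gs g z assume gs: "\<And>n. gs n \<in> Qb" and g: "g \<in> X" and z: "z \<in> X"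
      and dom: "\<And>n. AE \<omega> in M. \<bar>gs n \<omega> - g \<omega>\<bar> \<le> z \<omega>"
      and lim: "AE \<omega> in M. (\<lambda>n. gs n \<omega>) \<longlonglongrightarrow> g \<omega>"
    have gsX: "gs n \<in> X" for n using gs unfolding Qb_def by auto
    have [measurable]: "gs n \<in> borel_measurable M" "g \<in> borel_measurable M" for n
      using X_meas[OF ideal] gsX g by auto
    have "(\<lambda>n. \<integral>\<omega>. min 1 \<bar>gs n \<omega> - g \<omega>\<bar> \<partial>M) \<longlonglongrightarrow> (\<integral>\<omega>. 0 \<partial>M)"
    proof (rule integral_dominated_convergence[where w="\<lambda>_. 1"])
      show "AE \<omega> in M. (\<lambda>n. min 1 \<bar>gs n \<omega> - g \<omega>\<bar>) \<longlonglongrightarrow> 0"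
        using lim
      proof eventually_elim
        case (elim \<omega>)
        have "(\<lambda>n. gs n \<omega> - g \<omega>) \<longlonglongrightarrow> 0" using elim by (rule LIM_zero)
        then have "(\<lambda>n. \<bar>gs n \<omega> - g \<omega>\<bar>) \<longlonglongrightarrow> \<bar>0\<bar>" by (rule tendsto_rabs)
        then have "(\<lambda>n. min 1 \<bar>gs n \<omega> - g \<omega>\<bar>) \<longlonglongrightarrow> min 1 \<bar>0\<bar>" by (intro tendsto_min tendsto_const)
        then show ?case by simp
      qed
    qed auto
    then have "(\<lambda>n. \<integral>\<omega>. min 1 \<bar>gs n \<omega> - g \<omega>\<bar> \<partial>M) \<longlonglongrightarrow> 0" by simp
    show "g \<in> Qb" unfolding Qb_def
    proof (intro CollectI conjI allI impI g)
      fix \<epsilon> :: real assume e: "\<epsilon> > 0"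
      from \<open>(\<lambda>n. \<integral>\<omega>. min 1 \<bar>gs n \<omega> - g \<omega>\<bar> \<partial>M) \<longlonglongrightarrow> 0\<close> e
      have "\<forall>\<^sub>F n in sequentially. (\<integral>\<omega>. min 1 \<bar>gs n \<omega> - g \<omega>\<bar> \<partial>M) < \<epsilon>/2"
        by (intro order_tendstoD(2)) auto
      then obtain N where N: "(\<integral>\<omega>. min 1 \<bar>gs N \<omega> - g \<omega>\<bar> \<partial>M) < \<epsilon>/2"
        unfolding eventually_sequentially by blast
      obtain u' where u': "u' \<in> O_span f" "(\<integral>\<omega>. min 1 \<bar>u' \<omega> - gs N \<omega>\<bar> \<partial>M) < \<epsilon>/2"
        using Qb_get[OF gs[of N], of "\<epsilon>/2"] e by auto
      have i1: "integrable M (\<lambda>\<omega>. min 1 \<bar>u' \<omega> - gs N \<omega>\<bar>)" using intg OX u'(1) gsX by auto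
      have i2: "integrable M (\<lambda>\<omega>. min 1 \<bar>gs N \<omega> - g \<omega>\<bar>)" using intg gsX g by auto
      have i3: "integrable M (\<lambda>\<omega>. min 1 \<bar>u' \<omega> - g \<omega>\<bar>)" using intg OX u'(1) g by auto
      have "(\<integral>\<omega>. min 1 \<bar>u' \<omega> - g \<omega>\<bar> \<partial>M) \<le>
            (\<integral>\<omega>. min 1 \<bar>u' \<omega> - gs N \<omega>\<bar> + min 1 \<bar>gs N \<omega> - g \<omega>\<bar> \<partial>M)"
        using i1 i2 i3 min_tri[of "u' _ - gs N _" "gs N _ - g _"] by (intro integral_mono) auto
      also have "\<dots> = (\<integral>\<omega>. min 1 \<bar>u' \<omega> - gs N \<omega>\<bar> \<partial>M) + (\<integral>\<omega>. min 1 \<bar>gs N \<omega> - g \<omega>\<bar> \<partial>M)"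
        using i1 i2 by (rule Bochner_Integration.integral_add)
      also have "\<dots> < \<epsilon>" using u'(2) N by simp
      finally show "\<exists>w\<in>O_span f. (\<integral>\<omega>. min 1 \<bar>w \<omega> - g \<omega>\<bar> \<partial>M) < \<epsilon>"
        using u'(1) by blast
    qed
  qed
  have partB: "\<exists>gn :: nat \<Rightarrow> 'a \<Rightarrow> real. (\<forall>n. gn n \<in> O_span f) \<and>
           (AE \<omega> in M. (\<lambda>n. gn n \<omega>) \<longlonglongrightarrow> g \<omega>)" if g: "g \<in> X" for g
  proof -
    have "\<forall>n. \<exists>u. u \<in> O_span f \<and> (\<integral>\<omega>. min 1 \<bar>u \<omega> - g \<omega>\<bar> \<partial>M) < (1/2)^n"
    proof
      fix n :: nat
      have "(1/2::real)^n > 0" by simp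
      from Qb_get[OF subsetD[OF XQb g] this] show "\<exists>u. u \<in> O_span f \<and> (\<integral>\<omega>. min 1 \<bar>u \<omega> - g \<omega>\<bar> \<partial>M) < (1/2)^n"
        by blast
    qed
    from choice[OF this] obtain gn where gnall: "\<forall>n. gn n \<in> O_span f \<and> (\<integral>\<omega>. min 1 \<bar>gn n \<omega> - g \<omega>\<bar> \<partial>M) < (1/2)^n"
      by blast
    then have gn: "\<And>n. gn n \<in> O_span f" "\<And>n. (\<integral>\<omega>. min 1 \<bar>gn n \<omega> - g \<omega>\<bar> \<partial>M) < (1/2)^n"
      by simp_all
    have [measurable]: "gn n \<in> borel_measurable M" "g \<in> borel_measurable M" for n
      using X_meas[OF ideal] OX[OF gn(1)] g by auto
    have "AE \<omega> in M. (\<lambda>n. min 1 \<bar>gn n \<omega> - g \<omega>\<bar>) \<longlonglongrightarrow> 0"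
      by (rule ae_lim_zero) (use gn intg OX g in \<open>auto intro: less_imp_le\<close>)
    then have "AE \<omega> in M. (\<lambda>n. gn n \<omega>) \<longlonglongrightarrow> g \<omega>"
    proof eventually_elim
      case (elim \<omega>)
      have "\<forall>\<^sub>F n in sequentially. min 1 \<bar>gn n \<omega> - g \<omega>\<bar> < 1"
        using elim by (intro order_tendstoD(2)) auto
      then have ev: "\<forall>\<^sub>F n in sequentially. min 1 \<bar>gn n \<omega> - g \<omega>\<bar> = \<bar>gn n \<omega> - g \<omega>\<bar>"
        by eventually_elim (auto simp: min_def)
      have "(\<lambda>n. \<bar>gn n \<omega> - g \<omega>\<bar>) \<longlonglongrightarrow> 0"
        using Lim_transform_eventually[OF elim ev] .
      then have "(\<lambda>n. gn n \<omega> - g \<omega>) \<longlonglongrightarrow> 0" by (simp add: tendsto_rabs_zero_iff)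
      then show ?case by (rule LIM_zero_cancel)
    qed
    with gn(1) show ?thesis by blast
  qed
  show ?thesis using partA partB by blast
qed


end
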